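(* If $f(t)$ is the $f$-polynomial of a simplicial complex, then $f(t)+t f'(t)$ is the $f$-polynomial of a simplicial complex. Equivalently, if $(1,f_0,\dots,f_{d-1})$ is the $f$-vector of a simplicial complex, then so is $(1,2f_0,3f_1,\dots,(d+1)f_{d-1})$.
   Context: A simplicial complex $\Delta$ on a finite ground set is a family of subsets closed under taking subsets; its $f$-vector is $(f_{-1},f_0,\dots,f_{d-1})$ with $f_i$ the number of faces of cardinality $i+1$ ($f_{-1}=1$), and its $f$-polynomial is $\sum_{i=0}^{d}f_{i-1}t^i$. *)

theory Defs
  imports "HOL-Computational_Algebra.Polynomial"
begin

definition simplicial_complex :: "'a set set \<Rightarrow> bool" where
  "simplicial_complex \<Delta> \<longleftrightarrow>
     finite (\<Union>\<Delta>) \<and> {} \<in> \<Delta> \<and> (\<forall>F\<in>\<Delta>. \<forall>G. G \<subseteq> F \<longrightarrow> G \<in> \<Delta>)"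

text \<open>f-vector entry f_i: number of faces of cardinality i+1 (index shifted: fvec k = f_{k-1}).\<close>
definition fvec :: "'a set set \<Rightarrow> nat \<Rightarrow> nat" where
  "fvec \<Delta> k = card {F \<in> \<Delta>. card F = k}"

definition f_poly :: "'a set set \<Rightarrow> int poly" where
  "f_poly \<Delta> = (\<Sum>i\<le>Max (card ` \<Delta>). monom (int (fvec \<Delta> i)) i)"

end

theory Submission
  imports Defs
begin

lemma sc_finite: "simplicial_complex D \<Longrightarrow> finite D"
  unfolding simplicial_complex_def
  by (meson Sup_upper finite_Pow_iff finite_subset subsetI PowI)

lemma coeff_f_poly:
  assumes "finite D" "D \<noteq> {}" "\<forall>F\<in>D. finite F"
  shows "coeff (f_poly D) i = int (fvec D i)"
proof -
  let ?M = "Max (card ` D)"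
  have "coeff (f_poly D) i = (\<Sum>j\<le>?M. if j = i then int (fvec D j) else 0)"
    unfolding f_poly_def by (simp add: coeff_sum coeff_monom)
  also have "\<dots> = (if i \<le> ?M then int (fvec D i) else 0)"
    by (simp add: sum.delta)
  also have "\<dots> = int (fvec D i)"
  proof (cases "i \<le> ?M")
    case False
    have "{F \<in> D. card F = i} = {}"
    proof (rule ccontr)
      assume "{F \<in> D. card F = i} \<noteq> {}"
      then obtain F where "F \<in> D" "card F = i" by auto
      hence "i \<le> ?M" using assms by (metis Max_ge finite_imageI imageI)
      thus False using False by simp
    qed
    thus ?thesis using False unfolding fvec_def by (metis card.empty of_nat_0)
  qed simp
  finally show ?thesis .
qed

lemma props:
  assumes "simplicial_complex D"
  shows "finite D" "D \<noteq> {}" "\<forall>F\<in>D. finite F"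
  using assms sc_finite unfolding simplicial_complex_def
  by (auto intro: finite_subset[OF Sup_upper])

definition phi :: "'a set \<Rightarrow> 'a option \<Rightarrow> ('a \<times> bool) set" where
  "phi F m = (\<lambda>x. (x, m = Some x)) ` F"

definition Gam :: "'a set set \<Rightarrow> ('a \<times> bool) set set" where
  "Gam D = (\<lambda>(F,m). phi F m) ` (SIGMA F:D. insert None (Some ` F))"

lemma fst_phi: "fst ` phi F m = F"
  unfolding phi_def by (simp add: image_image)

lemma card_phi: "card (phi F m) = card F"
  unfolding phi_def by (rule card_image) (auto simp: inj_on_def)

lemma phi_inj:
  assumes "m \<in> insert None (Some ` F)" "m' \<in> insert None (Some ` F')"
    "phi F m = phi F' m'"
  shows "F = F' \<and> m = m'"
proof -
  have F: "F = F'" using fst_phi assms(3) by metis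
  have "m = m'"
  proof (cases m)
    case None
    show ?thesis
    proof (cases m')
      case (Some v)
      then have "v \<in> F'" using assms(2) by auto
      hence "(v, True) \<in> phi F' m'" using Some by (auto simp: phi_def)
      hence "(v, True) \<in> phi F m" using assms(3) by simp
      thus ?thesis using None by (auto simp: phi_def)
    qed (simp add: None)
  next
    case (Some v)
    then have "v \<in> F" using assms(1) by auto
    hence "(v, True) \<in> phi F m" using Some by (auto simp: phi_def)
    hence "(v, True) \<in> phi F' m'" using assms(3) by simp
    thus ?thesis using Some by (auto simp: phi_def)
  qed
  with F show ?thesis by simp
qed

lemma Gam_sc:
  assumes "simplicial_complex D"
  shows "simplicial_complex (Gam D)"
proof -
  have fin: "finite (\<Union>D)" and e: "{} \<in> D" and cl: "\<And>F G. F \<in> D \<Longrightarrow> G \<subseteq> F \<Longrightarrow> G \<in> D"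
    using assms unfolding simplicial_complex_def by auto
  have "\<Union>(Gam D) \<subseteq> (\<Union>D) \<times> UNIV"
  proof
    fix p assume "p \<in> \<Union>(Gam D)"
    then obtain A where "A \<in> Gam D" "p \<in> A" by blast
    then obtain F m where "F \<in> D" "p \<in> phi F m" unfolding Gam_def by auto
    then show "p \<in> (\<Union>D) \<times> UNIV" unfolding phi_def by auto
  qed
  hence f1: "finite (\<Union>(Gam D))"
    by (rule finite_subset) (simp add: fin)
  have f2: "{} \<in> Gam D"
    unfolding Gam_def
    by (rule image_eqI[where x="({}, None)"]) (auto simp: phi_def e)
  have f3: "G \<in> Gam D" if A: "A \<in> Gam D" and G: "G \<subseteq> A" for A G
  proof -
    obtain F m where Fm: "F \<in> D" "m \<in> insert None (Some ` F)" "A = phi F m"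
      using A unfolding Gam_def by auto
    define F' where "F' = fst ` G"
    define m' where "m' = (if \<exists>v. m = Some v \<and> v \<in> F' then m else None)"
    have "F' \<subseteq> F" unfolding F'_def using image_mono[OF G, of fst] Fm(3) fst_phi by metis
    hence F'D: "F' \<in> D" using cl Fm(1) by auto
    have m'i: "m' \<in> insert None (Some ` F')" unfolding m'_def by auto
    have "G = phi F' m'"
    proof
      show "G \<subseteq> phi F' m'"
      proof
        fix p assume p: "p \<in> G"
        then obtain x where x: "p = (x, m = Some x)" "x \<in> F"
          using G Fm(3) by (auto simp: phi_def)
        have "x \<in> F'" using p x F'_def by force
        thus "p \<in> phi F' m'" using x unfolding phi_def m'_def by auto
      qed
    next
      show "phi F' m' \<subseteq> G"
      proof
        fix p assume "p \<in> phi F' m'"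
        then obtain x where x: "x \<in> F'" "p = (x, m' = Some x)" by (auto simp: phi_def)
        then obtain b where xb: "(x, b) \<in> G" using F'_def by force
        hence "(x,b) \<in> phi F m" using G Fm(3) by auto
        hence "b = (m = Some x)" by (auto simp: phi_def)
        moreover have "(m' = Some x) = (m = Some x)" using x(1) unfolding m'_def by auto
        ultimately show "p \<in> G" using xb x by simp
      qed
    qed
    thus ?thesis unfolding Gam_def
      by (intro image_eqI[where x="(F', m')"]) (use F'D m'i in auto)
  qed
  show ?thesis unfolding simplicial_complex_def using f1 f2 f3 by blast
qed

lemma Gam_fvec:
  assumes "simplicial_complex D"
  shows "fvec (Gam D) k = Suc k * fvec D k"
proof -
  have fin: "finite (\<Union>D)" using assms unfolding simplicial_complex_def by auto
  have finF: "\<And>F. F \<in> D \<Longrightarrow> finite F" using fin by (meson Sup_upper finite_subset)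
  let ?S = "SIGMA F:{F \<in> D. card F = k}. insert None (Some ` F)"
  have eq: "{A \<in> Gam D. card A = k} = (\<lambda>(F,m). phi F m) ` ?S"
  proof
    show "{A \<in> Gam D. card A = k} \<subseteq> (\<lambda>(F,m). phi F m) ` ?S"
    proof
      fix A assume "A \<in> {A \<in> Gam D. card A = k}"
      then obtain F m where "F \<in> D" "m \<in> insert None (Some ` F)" "A = phi F m" "card A = k"
        unfolding Gam_def by blast
      then show "A \<in> (\<lambda>(F,m). phi F m) ` ?S"
        by (intro image_eqI[where x="(F,m)"]) (simp_all add: card_phi)
    qed
    show "(\<lambda>(F,m). phi F m) ` ?S \<subseteq> {A \<in> Gam D. card A = k}"
      unfolding Gam_def by (auto simp: card_phi)
  qed
  have inj: "inj_on (\<lambda>(F,m). phi F m) ?S"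
  proof (rule inj_onI)
    fix x y assume "x \<in> ?S" "y \<in> ?S" "(\<lambda>(F,m). phi F m) x = (\<lambda>(F,m). phi F m) y"
    then show "x = y" using phi_inj[where F="fst x" and m="snd x" and F'="fst y" and m'="snd y"]
      by (cases x, cases y) auto
  qed
  have "card ?S = (\<Sum>F\<in>{F \<in> D. card F = k}. card (insert None (Some ` F)))"
    by (rule card_SigmaI) (use sc_finite[OF assms] finF in auto)
  also have "\<dots> = (\<Sum>F\<in>{F \<in> D. card F = k}. Suc k)"
  proof (rule sum.cong)
    fix F assume "F \<in> {F \<in> D. card F = k}"
    hence "finite F" "card F = k" using finF by auto
    thus "card (insert None (Some ` F)) = Suc k"
      by (simp add: card_image)
  qed simp
  finally show ?thesis unfolding fvec_def eq card_image[OF inj] by simp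
qed

lemma transfer_sc:
  assumes "simplicial_complex G" "inj_on g (\<Union>G)"
  shows "simplicial_complex ((`) g ` G) \<and> (\<forall>k. fvec ((`) g ` G) k = fvec G k)"
proof -
  have fin: "finite (\<Union>G)" and e: "{} \<in> G" and cl: "\<And>F H. F \<in> G \<Longrightarrow> H \<subseteq> F \<Longrightarrow> H \<in> G"
    using assms unfolding simplicial_complex_def by auto
  have s: "simplicial_complex ((`) g ` G)"
    unfolding simplicial_complex_def
  proof (intro conjI ballI allI impI)
    show "finite (\<Union>((`) g ` G))" using fin by (metis finite_imageI image_Union)
    show "{} \<in> (`) g ` G" using e by force
    fix F H assume F: "F \<in> (`) g ` G" and H: "H \<subseteq> F"
    then obtain A where A: "A \<in> G" "F = g ` A" by auto
    have "H = g ` (A \<inter> g -` H)" using H A by auto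
    moreover have "A \<inter> g -` H \<in> G" using cl A(1) by auto
    ultimately show "H \<in> (`) g ` G" by blast
  qed
  have "fvec ((`) g ` G) k = fvec G k" for k
  proof -
    have cg: "card (g ` F) = card F" if "F \<in> G" for F
      by (rule card_image) (meson Sup_upper assms(2) inj_on_subset that)
    have eq: "{F \<in> (`) g ` G. card F = k} = (`) g ` {F \<in> G. card F = k}"
      using cg by auto
    have inj: "inj_on ((`) g) {F \<in> G. card F = k}"
      unfolding inj_on_def using assms(2)
      by (metis (no_types, lifting) Sup_upper inj_on_image_eq_iff mem_Collect_eq)
    show ?thesis unfolding fvec_def eq card_image[OF inj] ..
  qed
  with s show ?thesis by blast
qed

theorem proposition3p7:
  fixes \<Delta> :: "'a set set"
  assumes "simplicial_complex \<Delta>"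
  shows "\<exists>\<Gamma> :: nat set set. simplicial_complex \<Gamma> \<and>
           f_poly \<Gamma> = f_poly \<Delta> + [:0, 1:] * pderiv (f_poly \<Delta>)"
proof -
  have sG: "simplicial_complex (Gam \<Delta>)" by (rule Gam_sc[OF assms])
  have "finite (\<Union>(Gam \<Delta>))" using sG unfolding simplicial_complex_def by auto
  then obtain g :: "'a \<times> bool \<Rightarrow> nat" and n where g: "inj_on g (\<Union>(Gam \<Delta>))"
    using finite_imp_inj_to_nat_seg by blast
  define \<Gamma> where "\<Gamma> = (`) g ` Gam \<Delta>"
  have T: "simplicial_complex \<Gamma>" "\<And>k. fvec \<Gamma> k = fvec (Gam \<Delta>) k"
    using transfer_sc[OF sG g] unfolding \<Gamma>_def by auto
  have "coeff (f_poly \<Gamma>) i = coeff (f_poly \<Delta> + [:0, 1:] * pderiv (f_poly \<Delta>)) i" for i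
  proof -
    have l: "coeff (f_poly \<Gamma>) i = int (Suc i * fvec \<Delta> i)"
      using coeff_f_poly[OF props[OF T(1)]] T(2) Gam_fvec[OF assms] by simp
    have r: "coeff (f_poly \<Delta> + [:0, 1:] * pderiv (f_poly \<Delta>)) i
        = int (fvec \<Delta> i) + int i * int (fvec \<Delta> i)"
    proof (cases i)
      case 0 thus ?thesis using coeff_f_poly[OF props[OF assms]] by simp
    next
      case (Suc j) thus ?thesis
        using coeff_f_poly[OF props[OF assms]] by (simp add: coeff_pderiv)
    qed
    show ?thesis using l r by (simp add: algebra_simps)
  qed
  hence "f_poly \<Gamma> = f_poly \<Delta> + [:0, 1:] * pderiv (f_poly \<Delta>)" by (rule poly_eqI)
  with T(1) show ?thesis by blast
qed

end
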